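(* Let $A\in\mathcal A_n$, let $T=\tau(A)$, and fix an integer $g\ge0$. Then $\operatorname{gldim}(A)\le g$ if and only if there are no two siblings $i<j$ in $T$ such that the subtree rooted at $i$ has depth at least $\lfloor g/2\rfloor$ and the subtree rooted at $j$ has depth at least $\lceil g/2\rceil$.
   Context: $\mathcal A_n$ is the set of ordered products $A=A_1\times\cdots\times A_k$ of connected linear Nakayama algebras (over an algebraically closed field) with $n$ simple modules in total; its Kupisch series $[c_0,\dots,c_{n-1}]$ is the concatenation of those of the factors, where a connected linear Nakayama algebra with $m$ simple modules has Kupisch series $[c_0,\dots,c_{m-1}]$, $c_i=\dim e_iA$, characterized by $c_{i+1}+1\ge c_i\ge2$ for $0\le i<m-1$ and $c_{m-1}=1$. The global dimension of $A$ is the maximum of those of its factors. $\tau(A)$ is the tree on $\{0,\dots,n\}$, rooted at $n$, in which the parent of $i$ is $i+c_i$ for $0\le i<n$. Siblings are distinct vertices with the same parent, compared by their labels. The depth of a subtree rooted at a vertex $v$ is the maximal number of edges on a path from $v$ down to a descendant of $v$. *)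

theory Defs
  imports Main
begin

text \<open>Kupisch series of a connected linear Nakayama algebra with m simples:
  c_{m-1} = 1 and c_{i+1} + 1 \<ge> c_i \<ge> 2 for i < m-1.\<close>
definition kupisch_conn :: "nat list \<Rightarrow> bool" where
  "kupisch_conn c \<longleftrightarrow> c \<noteq> [] \<and> last c = 1 \<and>
     (\<forall>i. Suc i < length c \<longrightarrow> 2 \<le> c ! i \<and> c ! i \<le> c ! Suc i + 1)"

text \<open>An algebra in A_n is an ordered list of connected factors; its Kupisch series
  is the concatenation.\<close>
definition kupisch :: "nat list list \<Rightarrow> nat list" where
  "kupisch As = concat As"

text \<open>Projective dimension of the indecomposable module M(i,l) = e_i A / e_i J^l
  (top S_i, length l) over the Nakayama algebra with Kupisch series c.
  Its projective cover is e_i A (length c_i); if l < c_i its syzygy is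
  e_i J^l = M(i+l, c_i - l), otherwise M is projective.\<close>
function pdim :: "nat list \<Rightarrow> nat \<Rightarrow> nat \<Rightarrow> nat" where
  "pdim c i l = (if i < length c \<and> 0 < l \<and> l < c ! i
                 then Suc (pdim c (i + l) (c ! i - l)) else 0)"
  by pat_completeness auto
termination
  by (relation "measure (\<lambda>(c, i, l). length c - i)") auto

text \<open>Global dimension of a connected linear Nakayama algebra: maximum of the
  projective dimensions of the simple modules S_i = M(i,1).\<close>
definition gldim_conn :: "nat list \<Rightarrow> nat" where
  "gldim_conn c = Max (insert 0 {pdim c i 1 | i. i < length c})"

definition gldim :: "nat list list \<Rightarrow> nat" where
  "gldim As = Max (insert 0 (gldim_conn ` set As))"

definition tau_parent :: "nat list \<Rightarrow> nat \<Rightarrow> nat" where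
  "tau_parent c i = i + c ! i"

definition tau_edges :: "nat list \<Rightarrow> (nat \<times> nat) set" where
  "tau_edges c = {(i, tau_parent c i) | i. i < length c}"

definition siblings :: "nat list \<Rightarrow> nat \<Rightarrow> nat \<Rightarrow> bool" where
  "siblings c i j \<longleftrightarrow> i < length c \<and> j < length c \<and> i \<noteq> j \<and>
     tau_parent c i = tau_parent c j"

definition subtree_depth :: "nat list \<Rightarrow> nat \<Rightarrow> nat" where
  "subtree_depth c v = Max {k. \<exists>u. (u, v) \<in> tau_edges c ^^ k}"

end

theory Submission imports Defs begin

declare pdim.simps[simp del]

definition GK :: "nat list \<Rightarrow> bool" where
  "GK K \<longleftrightarrow> (\<forall>i<length K. 0 < K!i \<and> i + K!i \<le> length K) \<and>
     (\<forall>i. Suc i < length K \<longrightarrow> i + K!i \<le> Suc i + K!Suc i)"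

lemma conn_GK: assumes "kupisch_conn c" shows "GK c"
proof -
  have ne: "c \<noteq> []" and la: "last c = 1" and st: "\<And>i. Suc i < length c \<Longrightarrow> 2 \<le> c ! i \<and> c ! i \<le> c ! Suc i + 1"
    using assms unfolding kupisch_conn_def by auto
  have lst: "c ! (length c - 1) = 1" using ne la by (simp add: last_conv_nth)
  have pos: "0 < c!i" if "i < length c" for i
  proof (cases "Suc i < length c")
    case True then show ?thesis using st[of i] by auto
  next
    case False then have "i = length c - 1" using that by auto
    then show ?thesis using lst by simp
  qed
  have bd: "i + c!i \<le> length c" if "i < length c" for i
  proof -
    have "i \<le> length c - 1" using that by auto
    then show ?thesis
    proof (induction rule: inc_induct)
      case base then show ?case using lst ne by (cases c) auto
    next
      case (step m)
      then have "Suc m < length c" by auto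
      then have "c ! m \<le> c ! Suc m + 1" using st[of m] by auto
      then show ?case using step by auto
    qed
  qed
  have "i + c!i \<le> Suc i + c!Suc i" if "Suc i < length c" for i using st[OF that] by simp
  then show ?thesis unfolding GK_def using pos bd by blast
qed

lemma GK_append: assumes "GK xs" "GK ys" shows "GK (xs @ ys)"
proof -
  have h1: "0 < (xs @ ys) ! i \<and> i + (xs @ ys) ! i \<le> length (xs @ ys)"
    if i: "i < length (xs @ ys)" for i
  proof (cases "i < length xs")
    case True then show ?thesis using assms(1) unfolding GK_def by (auto simp: nth_append)
  next
    case False
    define j where "j = i - length xs"
    have j: "i = length xs + j" "j < length ys" using i False unfolding j_def by auto
    then show ?thesis using assms(2) unfolding GK_def by (auto simp: nth_append)
  qed
  have h2: "i + (xs @ ys) ! i \<le> Suc i + (xs @ ys) ! Suc i"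
    if i: "Suc i < length (xs @ ys)" for i
  proof (cases "Suc i < length xs")
    case True then show ?thesis using assms(1) unfolding GK_def by (auto simp: nth_append)
  next
    case False
    show ?thesis
    proof (cases "i < length xs")
      case True
      then have "i = length xs - 1" using False by auto
      then show ?thesis using assms(1) True False unfolding GK_def by (auto simp: nth_append)
    next
      case F2: False
      define j where "j = i - length xs"
      have j: "i = length xs + j" "Suc j < length ys" using i F2 unfolding j_def by auto
      then show ?thesis using assms(2) unfolding GK_def by (auto simp: nth_append)
    qed
  qed
  show ?thesis unfolding GK_def using h1 h2 by blast
qed

lemma GK_Nil: "GK []" unfolding GK_def by auto

lemma GK_concat: "\<forall>c\<in>set As. kupisch_conn c \<Longrightarrow> GK (concat As)"
  by (induction As) (auto intro: GK_append conn_GK simp: GK_Nil)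

lemma pdim_shift: "pdim ys i l = pdim (xs @ ys) (length xs + i) l"
proof (induction ys i l rule: pdim.induct)
  case (1 c i l)
  show ?case
    by (subst pdim.simps, subst (2) pdim.simps) (use 1 in \<open>auto simp: nth_append add.assoc\<close>)
qed

lemma pdim_prefix: "GK xs \<Longrightarrow> i < length xs \<Longrightarrow> pdim (xs @ ys) i l = pdim xs i l"
proof (induction xs i l rule: pdim.induct)
  case (1 c i l)
  show ?case
  proof (cases "0 < l \<and> l < c ! i")
    case True
    have "i + c!i \<le> length c" using 1(2,3) unfolding GK_def by blast
    then have "i + l < length c" using True by linarith
    then show ?thesis
      by (subst pdim.simps, subst (2) pdim.simps) (use 1 True in \<open>auto simp: nth_append\<close>)
  next
    case False
    then show ?thesis
      by (subst pdim.simps, subst (2) pdim.simps) (use 1 in \<open>auto simp: nth_append\<close>)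
  qed
qed

lemma Max_ins0_le: "finite S \<Longrightarrow> Max (insert 0 S) \<le> (g::nat) \<longleftrightarrow> (\<forall>x\<in>S. x \<le> g)"
  by simp

lemma gldim_conn_le: "gldim_conn c \<le> g \<longleftrightarrow> (\<forall>i<length c. pdim c i 1 \<le> g)"
proof -
  have "finite {pdim c i 1 | i. i < length c}" by simp
  then show ?thesis unfolding gldim_conn_def by (subst Max_ins0_le) auto
qed

lemma gldim_le: "gldim As \<le> g \<longleftrightarrow> (\<forall>c\<in>set As. \<forall>i<length c. pdim c i 1 \<le> g)"
  unfolding gldim_def by (subst Max_ins0_le) (auto simp: gldim_conn_le)

lemma gldim_concat: "\<forall>c\<in>set As. kupisch_conn c \<Longrightarrow>
   gldim As \<le> g \<longleftrightarrow> (\<forall>i<length (concat As). pdim (concat As) i 1 \<le> g)"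
proof (induction As)
  case Nil then show ?case by (simp add: gldim_le)
next
  case (Cons c As)
  have gc: "GK c" using Cons(2) conn_GK by auto
  have "(\<forall>i<length (concat (c#As)). pdim (concat (c#As)) i 1 \<le> g) \<longleftrightarrow>
     (\<forall>i<length c. pdim c i 1 \<le> g) \<and> (\<forall>j<length (concat As). pdim (concat As) j 1 \<le> g)"
  proof -
    have e: "concat (c#As) = c @ concat As" by simp
    show ?thesis unfolding e
    proof safe
      fix i assume h: "\<forall>i<length (c @ concat As). pdim (c @ concat As) i 1 \<le> g" "i < length c"
      have "i < length (c @ concat As)" using h(2) by simp
      then have "pdim (c @ concat As) i 1 \<le> g" using h(1) by blast
      then show "pdim c i 1 \<le> g" using pdim_prefix[OF gc h(2)] by simp
    next
      fix j assume h: "\<forall>i<length (c @ concat As). pdim (c @ concat As) i 1 \<le> g" "j < length (concat As)"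
      then show "pdim (concat As) j 1 \<le> g" using pdim_shift[of "concat As" j 1 c] by auto
    next
      fix i assume h: "\<forall>i<length c. pdim c i 1 \<le> g" "\<forall>j<length (concat As). pdim (concat As) j 1 \<le> g"
        "i < length (c @ concat As)"
      show "pdim (c @ concat As) i 1 \<le> g"
      proof (cases "i < length c")
        case True then show ?thesis using h pdim_prefix[OF gc True] by auto
      next
        case False
        define j where "j = i - length c"
        have "i = length c + j" "j < length (concat As)" using h(3) False unfolding j_def by auto
        then show ?thesis using h(2) pdim_shift[of "concat As" j 1 c] by auto
      qed
    qed
  qed
  then show ?case using Cons by (auto simp: gldim_le)
qed

fun sq :: "(nat \<Rightarrow> nat) \<Rightarrow> nat \<Rightarrow> nat \<Rightarrow> nat \<Rightarrow> nat" where
  "sq P u v 0 = u" | "sq P u v (Suc 0) = v" | "sq P u v (Suc (Suc k)) = P (sq P u v k)"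

lemma sq_shift: "sq P u v (Suc k) = sq P v (P u) k"
proof (induction k rule: less_induct)
  case (less k)
  show ?case
  proof (cases k)
    case 0 then show ?thesis by simp
  next
    case (Suc k1)
    then show ?thesis
    proof (cases k1)
      case 0 then show ?thesis using Suc by simp
    next
      case (Suc k2)
      then show ?thesis using \<open>k = Suc k1\<close> less[of k2] by simp
    qed
  qed
qed

lemma sq_fp2: "sq P u v (2*t) = (P^^t) u \<and> sq P u v (2*t+1) = (P^^t) v"
proof (induction t)
  case 0 then show ?case by simp
next
  case (Suc t)
  have e1: "2 * Suc t = Suc (Suc (2*t))" by simp
  have e2: "2 * Suc t + 1 = Suc (Suc (2*t+1))" by simp
  show ?case unfolding e1 e2 using Suc by simp
qed

lemma sq_fp: "sq P u v k = (P^^(k div 2)) (if even k then u else v)"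
proof -
  have "k = 2 * (k div 2) + k mod 2" by simp
  then show ?thesis
    by (cases "even k") (metis sq_fp2 even_iff_mod_2_eq_zero add_0_right,
        metis sq_fp2 odd_iff_mod_2_eq_one)
qed

lemma sq_anc: "a \<le> k div 2 \<Longrightarrow> \<exists>d. (P^^a) d = sq P u v k"
proof -
  assume "a \<le> k div 2"
  then have "k div 2 = a + (k div 2 - a)" by simp
  then have "(P^^(k div 2)) = (P^^a) \<circ> (P^^(k div 2 - a))" by (metis funpow_add)
  then show ?thesis unfolding sq_fp by auto
qed

locale mp =
  fixes P :: "nat \<Rightarrow> nat" and n :: nat
  assumes mono: "i \<le> j \<Longrightarrow> P i \<le> P j"
    and gt: "i < n \<Longrightarrow> i < P i"
    and le: "i < n \<Longrightarrow> P i \<le> n"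
    and fx: "n \<le> i \<Longrightarrow> P i = i"
begin

lemma ge: "i \<le> P i"
  using gt fx by (cases "i < n") (auto simp: less_imp_le)

lemma le2: "i \<le> n \<Longrightarrow> P i \<le> n"
  using le fx by (cases "i < n") auto

lemma fp_mono: "i \<le> j \<Longrightarrow> (P^^k) i \<le> (P^^k) j"
  by (induction k) (auto intro: mono)

lemma fp_ge: "i \<le> (P^^k) i"
  by (induction k) (auto intro: order_trans[OF _ ge])

lemma fp_le: "i \<le> n \<Longrightarrow> (P^^k) i \<le> n"
  by (induction k) (auto intro: le2)

lemma fp_lt: "(P^^k) u < n \<Longrightarrow> u + k \<le> (P^^k) u"
proof (induction k)
  case 0 then show ?case by simp
next
  case (Suc k)
  have "(P^^k) u < n"
  proof (rule ccontr)
    assume "\<not> (P^^k) u < n"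
    then have "P ((P^^k) u) = (P^^k) u" using fx by auto
    then show False using Suc(2) \<open>\<not> (P^^k) u < n\<close> by simp
  qed
  then show ?case using Suc gt[of "(P^^k) u"] by simp
qed

lemma sq_mono: "u \<le> v \<Longrightarrow> v \<le> P u \<Longrightarrow> sq P u v k \<le> sq P u v (Suc k)"
proof (induction k rule: less_induct)
  case (less k)
  show ?case
  proof (cases k)
    case 0 then show ?thesis using less by simp
  next
    case (Suc k1)
    then show ?thesis
    proof (cases k1)
      case 0 then show ?thesis using Suc less by simp
    next
      case (Suc k2)
      then show ?thesis using \<open>k = Suc k1\<close> less(1)[of k2] less(2,3) by (simp add: mono)
    qed
  qed
qed

lemma sq_prop: "u \<le> v \<Longrightarrow> v \<le> P u \<Longrightarrow> sq P u v (j + 2*e) < sq P u v (Suc (j + 2*e)) \<Longrightarrow>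
   sq P u v j < sq P u v (Suc j)"
proof (induction e)
  case 0 then show ?case by simp
next
  case (Suc e)
  show ?case
  proof (rule Suc.IH[OF Suc.prems(1,2)], rule ccontr)
    assume "\<not> sq P u v (j + 2 * e) < sq P u v (Suc (j + 2 * e))"
    then have "sq P u v (j + 2 * e) = sq P u v (Suc (j + 2 * e))"
      using sq_mono[OF Suc.prems(1,2), of "j + 2*e"] by simp
    then have "sq P u v (Suc (Suc (j + 2 * e))) = sq P u v (Suc (Suc (Suc (j + 2 * e))))"
      by simp
    then show False using Suc.prems(3) by simp
  qed
qed

lemma sq_bound: "u \<le> n \<Longrightarrow> v \<le> n \<Longrightarrow> sq P u v k \<le> n"
  unfolding sq_fp by (auto intro: fp_le)

lemma core_fwd:
  assumes i: "i < n" and st: "\<forall>k\<le>g. sq P i (Suc i) (Suc k) < sq P i (Suc i) (Suc (Suc k))"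
  shows "\<exists>u v. u < v \<and> v < n \<and> P u = P v \<and> (\<exists>d. (P^^(g div 2)) d = u) \<and>
     (\<exists>e. (P^^((g+1) div 2)) e = v)"
proof -
  let ?x = "sq P i (Suc i)"
  have a1: "i \<le> Suc i" "Suc i \<le> P i" using gt[OF i] by auto
  have ex: "\<exists>r. ?x r = ?x (Suc r)"
  proof (rule ccontr)
    assume "\<not> ?thesis"
    then have s: "?x r < ?x (Suc r)" for r using sq_mono[OF a1, of r] by (simp add: le_less)
    have "r \<le> ?x r" for r
    proof (induction r)
      case 0 then show ?case by simp
    next
      case (Suc r) then show ?case using s[of r] by simp
    qed
    then have "Suc n \<le> ?x (Suc n)" by blast
    moreover have "?x (Suc n) \<le> n" using sq_bound i by simp
    ultimately show False by simp
  qed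
  define r where "r = (LEAST r. ?x r = ?x (Suc r))"
  have r: "?x r = ?x (Suc r)" unfolding r_def using ex by (rule LeastI_ex)
  have lt: "?x j < ?x (Suc j)" if "j < r" for j
  proof -
    have "?x j \<noteq> ?x (Suc j)" using not_less_Least[OF that[unfolded r_def]] by blast
    then show ?thesis using sq_mono[OF a1, of j] by simp
  qed
  have rg: "g + 2 \<le> r"
  proof (rule ccontr)
    assume "\<not> g + 2 \<le> r"
    then have "r = 0 \<or> (\<exists>k\<le>g. r = Suc k)" by presburger
    then show False
    proof
      assume "r = 0" then show False using r by simp
    next
      assume "\<exists>k\<le>g. r = Suc k"
      then obtain k where "k \<le> g" "r = Suc k" by blast
      then have "?x (Suc k) < ?x (Suc (Suc k))" using st by blast
      then show False using r \<open>r = Suc k\<close> by simp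
    qed
  qed
  define q where "q = r - 2"
  have q: "r = Suc (Suc q)" "g \<le> q" using rg unfolding q_def by auto
  have "?x q < ?x (Suc q)" using lt q by simp
  moreover have "?x (Suc q) < ?x r" using lt[of "Suc q"] q by simp
  moreover have "?x r \<le> n" using sq_bound i by simp
  moreover have "P (?x q) = P (?x (Suc q))" using r q by simp
  moreover have "\<exists>d. (P^^(g div 2)) d = ?x q" by (rule sq_anc) (use q in auto)
  moreover have "\<exists>d. (P^^((g+1) div 2)) d = ?x (Suc q)" by (rule sq_anc) (use q in auto)
  ultimately show ?thesis using order_less_le_trans by blast
qed


lemma crit:
  assumes "i < n" "sq P i (Suc i) g < sq P i (Suc i) (Suc g)"
    "sq P i (Suc i) (Suc g) < sq P i (Suc i) (Suc (Suc g))"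
  shows "\<forall>k\<le>g. sq P i (Suc i) (Suc k) < sq P i (Suc i) (Suc (Suc k))"
proof (intro allI impI)
  fix k assume k: "k \<le> g"
  have a1: "i \<le> Suc i" "Suc i \<le> P i" using gt[OF assms(1)] by auto
  define e where "e = (g - k) div 2"
  show "sq P i (Suc i) (Suc k) < sq P i (Suc i) (Suc (Suc k))"
  proof (cases "even (g - k)")
    case True
    then have "Suc k + 2 * e = Suc g" unfolding e_def using k by auto
    then show ?thesis using sq_prop[OF a1, of "Suc k" e] assms(3) by simp
  next
    case False
    then have "Suc k + 2 * e = g" unfolding e_def using k by presburger
    then show ?thesis using sq_prop[OF a1, of "Suc k" e] assms(2) by simp
  qed
qed

lemma maxlem:
  assumes "(P^^a) w = y"
  shows "\<exists>i. w \<le> i \<and> (P^^a) i = y \<and> y < (P^^a) (Suc i)"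
proof -
  define S where "S = {z. (P^^a) z \<le> y}"
  have fin: "finite S"
  proof (rule finite_subset)
    show "S \<subseteq> {..y}" unfolding S_def using fp_ge order_trans by blast
  qed simp
  have wS: "w \<in> S" unfolding S_def using assms by simp
  define i where "i = Max S"
  have iS: "i \<in> S" unfolding i_def using fin wS Max_in by blast
  have wi: "w \<le> i" unfolding i_def using fin wS by simp
  have "(P^^a) i = y" using iS fp_mono[OF wi, of a] assms unfolding S_def by simp
  moreover have "Suc i \<notin> S" using fin unfolding i_def using Max_ge Suc_n_not_le_n by blast
  ultimately show ?thesis using wi unfolding S_def by auto
qed

lemma core_bwd:
  assumes uv: "u < v" "v < n" "P u = P v"
    and d: "(P^^(g div 2)) d = u" and e: "(P^^((g+1) div 2)) e = v"
  shows "\<exists>i<n. \<forall>k\<le>g. sq P i (Suc i) (Suc k) < sq P i (Suc i) (Suc (Suc k))"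
proof (cases "even g")
  case True
  then obtain t where t: "g = 2*t" by blast
  then have d': "(P^^t) d = u" and e': "(P^^t) e = v" using d e by auto
  obtain i where i: "d \<le> i" "(P^^t) i = u" "u < (P^^t) (Suc i)" using maxlem[OF d'] by blast
  have ie: "Suc i \<le> e"
  proof (rule ccontr)
    assume "\<not> Suc i \<le> e"
    then have "e \<le> i" by simp
    then have "(P^^t) e \<le> (P^^t) i" by (rule fp_mono)
    then show False using i e' uv by simp
  qed
  have x2: "(P^^t) (Suc i) \<le> v" using fp_mono[OF ie, of t] e' by simp
  have iu: "i \<le> u" using fp_ge[of i t] i by simp
  have ilt: "i < n" using iu uv by simp
  have s1: "sq P i (Suc i) g = u" using sq_fp2[of P i "Suc i" t] t i by simp
  have s2: "sq P i (Suc i) (Suc g) = (P^^t) (Suc i)" using sq_fp2[of P i "Suc i" t] t by simp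
  have s3: "sq P i (Suc i) (Suc (Suc g)) = P u" using sq_fp2[of P i "Suc i" "Suc t"] t i by simp
  have vP: "v < P v" using gt uv by simp
  have c1: "sq P i (Suc i) g < sq P i (Suc i) (Suc g)" using s1 s2 i by linarith
  have c2: "sq P i (Suc i) (Suc g) < sq P i (Suc i) (Suc (Suc g))" using s2 s3 x2 uv vP by linarith
  show ?thesis using crit[OF ilt c1 c2] ilt by blast
next
  case False
  then obtain t where t: "g = 2*t + 1" by (metis oddE)
  then have d': "(P^^t) d = u" and e': "(P^^(Suc t)) e = v" using d e by auto
  obtain i where i: "e \<le> i" "(P^^(Suc t)) i = v" "v < (P^^(Suc t)) (Suc i)" using maxlem[OF e'] by blast
  have "v < P v" using gt uv by simp
  then have dv: "v < (P^^(Suc t)) d" using d' uv by simp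
  have id: "Suc i \<le> d"
  proof (rule ccontr)
    assume "\<not> Suc i \<le> d"
    then have "d \<le> i" by simp
    then have "(P^^(Suc t)) d \<le> (P^^(Suc t)) i" by (rule fp_mono)
    then show False using i dv by simp
  qed
  have x1: "(P^^t) (Suc i) \<le> u" using fp_mono[OF id, of t] d' by simp
  have iu: "i \<le> v" using fp_ge[of i "Suc t"] i by simp
  have ilt: "i < n" using iu uv by simp
  have s1: "sq P i (Suc i) g = (P^^t) (Suc i)" using sq_fp2[of P i "Suc i" t] t by simp
  have s2: "sq P i (Suc i) (Suc g) = v" using sq_fp2[of P i "Suc i" "Suc t"] t i by simp
  have s3: "sq P i (Suc i) (Suc (Suc g)) = (P^^(Suc t)) (Suc i)"
    using sq_fp2[of P i "Suc i" "Suc t"] t by simp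
  have c1: "sq P i (Suc i) g < sq P i (Suc i) (Suc g)" using s1 s2 x1 uv by linarith
  have c2: "sq P i (Suc i) (Suc g) < sq P i (Suc i) (Suc (Suc g))" using s2 s3 i by linarith
  show ?thesis using crit[OF ilt c1 c2] ilt by blast
qed

end

definition nP :: "nat list \<Rightarrow> nat \<Rightarrow> nat" where
  "nP K i = (if i < length K then i + K!i else i)"

lemma GK_mp: assumes "GK K" shows "mp (nP K) (length K)"
proof -
  have st: "nP K i \<le> nP K (Suc i)" for i
  proof -
    consider "Suc i < length K" | "Suc i = length K" | "length K \<le> i" by linarith
    then show ?thesis
    proof cases
      case 1 then show ?thesis using assms unfolding GK_def nP_def by auto
    next
      case 2 then show ?thesis using assms unfolding GK_def nP_def by auto
    next
      case 3 then show ?thesis unfolding nP_def by auto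
    qed
  qed
  show ?thesis
  proof
    fix i j :: nat assume "i \<le> j" then show "nP K i \<le> nP K j" using lift_Suc_mono_le[of "nP K", OF st] by blast
  next
    fix i assume "i < length K" then show "i < nP K i" using assms unfolding GK_def nP_def by auto
  next
    fix i assume "i < length K" then show "nP K i \<le> length K" using assms unfolding GK_def nP_def by auto
  next
    fix i assume "length K \<le> i" then show "nP K i = i" unfolding nP_def by auto
  qed
qed

lemma pdim_unfold:
  assumes "u < length K" "u < v"
  shows "pdim K u (v - u) = (if v < nP K u then Suc (pdim K v (nP K u - v)) else 0)"
proof -
  have "pdim K u (v - u) = (if u < length K \<and> 0 < v - u \<and> v - u < K ! u
          then Suc (pdim K (u + (v - u)) (K ! u - (v - u))) else 0)"
    by (rule pdim.simps)
  moreover have "u + (v - u) = v" using assms by simp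
  moreover have "K ! u - (v - u) = nP K u - v" using assms unfolding nP_def by simp
  moreover have "(u < length K \<and> 0 < v - u \<and> v - u < K ! u) = (v < nP K u)"
    using assms unfolding nP_def by auto
  ultimately show ?thesis by simp
qed

lemma pdim_sq:
  assumes G: "GK K"
  shows "u < v \<Longrightarrow> v \<le> nP K u \<Longrightarrow>
    (m \<le> pdim K u (v - u)) = (\<forall>k<m. sq (nP K) u v (Suc k) < sq (nP K) u v (Suc (Suc k)))"
proof (induction m arbitrary: u v)
  case 0 then show ?case by simp
next
  case (Suc m)
  interpret mp "nP K" "length K" using GK_mp[OF G] .
  have ul: "u < length K"
  proof (rule ccontr)
    assume "\<not> u < length K" then have "nP K u = u" unfolding nP_def by simp
    then show False using Suc.prems by simp
  qed
  have eq: "(\<forall>k<Suc m. sq (nP K) u v (Suc k) < sq (nP K) u v (Suc (Suc k))) =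
     (v < nP K u \<and> (\<forall>k<m. sq (nP K) v (nP K u) (Suc k) < sq (nP K) v (nP K u) (Suc (Suc k))))"
  proof -
    have "(\<forall>k<Suc m. sq (nP K) u v (Suc k) < sq (nP K) u v (Suc (Suc k))) =
      (sq (nP K) u v (Suc 0) < sq (nP K) u v (Suc (Suc 0)) \<and>
       (\<forall>k<m. sq (nP K) u v (Suc (Suc k)) < sq (nP K) u v (Suc (Suc (Suc k)))))"
      by (auto simp: less_Suc_eq_0_disj simp del: sq.simps)
    also have "\<dots> = (v < nP K u \<and> (\<forall>k<m. sq (nP K) v (nP K u) (Suc k) < sq (nP K) v (nP K u) (Suc (Suc k))))"
      by (simp only: sq_shift[of "nP K" u v] sq.simps(1,2))
    finally show ?thesis .
  qed
  show ?case
  proof (cases "v < nP K u")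
    case True
    have ih: "(m \<le> pdim K v (nP K u - v)) =
      (\<forall>k<m. sq (nP K) v (nP K u) (Suc k) < sq (nP K) v (nP K u) (Suc (Suc k)))"
      using Suc.IH[OF True] mono[of u v] Suc.prems by simp
    show ?thesis unfolding eq pdim_unfold[OF ul Suc.prems(1)] using True ih by simp
  next
    case False
    show ?thesis unfolding eq pdim_unfold[OF ul Suc.prems(1)] using False by simp
  qed
qed

lemma edges_pow: "(u, v) \<in> tau_edges K ^^ k \<Longrightarrow> (nP K ^^ k) u = v"
proof (induction k arbitrary: v)
  case 0 then show ?case by simp
next
  case (Suc k)
  then obtain y where y: "(u, y) \<in> tau_edges K ^^ k" "(y, v) \<in> tau_edges K" by auto
  then have "y < length K" "v = nP K y" unfolding tau_edges_def tau_parent_def nP_def by auto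
  then show ?case using Suc.IH[OF y(1)] by simp
qed

lemma pow_edges: assumes G: "GK K" shows "v < length K \<Longrightarrow> (nP K ^^ k) u = v \<Longrightarrow> (u, v) \<in> tau_edges K ^^ k"
proof (induction k arbitrary: v)
  case 0 then show ?case by simp
next
  case (Suc k)
  define y where "y = (nP K ^^ k) u"
  have v: "nP K y = v" using Suc.prems unfolding y_def by simp
  have yl: "y < length K"
  proof (rule ccontr)
    assume "\<not> y < length K" then have "nP K y = y" unfolding nP_def by simp
    then show False using v Suc.prems \<open>\<not> y < length K\<close> by simp
  qed
  have "(u, y) \<in> tau_edges K ^^ k" using Suc.IH[of y] yl unfolding y_def by simp
  moreover have "(y, v) \<in> tau_edges K" using yl v unfolding tau_edges_def tau_parent_def nP_def by auto
  ultimately show ?case by auto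
qed

lemma depth_iff:
  assumes G: "GK K" and v: "v < length K"
  shows "(d \<le> subtree_depth K v) = (\<exists>u. (nP K ^^ d) u = v)"
proof -
  interpret mp "nP K" "length K" using GK_mp[OF G] .
  define S where "S = {k. \<exists>u. (u, v) \<in> tau_edges K ^^ k}"
  have S: "S = {k. \<exists>u. (nP K ^^ k) u = v}" unfolding S_def using edges_pow pow_edges[OF G v] by blast
  have fin: "finite S"
  proof (rule finite_subset)
    show "S \<subseteq> {..v}" unfolding S using fp_lt v by fastforce
  qed simp
  have ne: "S \<noteq> {}" unfolding S by (metis (mono_tags, lifting) empty_Collect_eq funpow_0)
  have "(d \<le> subtree_depth K v) = (\<exists>k\<in>S. d \<le> k)"
    unfolding subtree_depth_def S_def[symmetric] using Max_ge_iff[OF fin ne] by blast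
  also have "\<dots> = (\<exists>u. (nP K ^^ d) u = v)"
  proof
    assume "\<exists>k\<in>S. d \<le> k"
    then obtain k u where k: "d \<le> k" "(nP K ^^ k) u = v" unfolding S by blast
    then have "(nP K ^^ k) = (nP K ^^ d) \<circ> (nP K ^^ (k - d))" by (metis funpow_add le_add_diff_inverse)
    then show "\<exists>u. (nP K ^^ d) u = v" using k by (metis comp_apply)
  next
    assume "\<exists>u. (nP K ^^ d) u = v" then show "\<exists>k\<in>S. d \<le> k" unfolding S by blast
  qed
  finally show ?thesis .
qed

theorem lemma3p9:
  fixes As :: "nat list list" and g :: nat
  assumes "\<forall>c \<in> set As. kupisch_conn c"
  shows "gldim As \<le> g \<longleftrightarrow>
    \<not> (\<exists>i j. i < j \<and> siblings (kupisch As) i j \<and>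
          g div 2 \<le> subtree_depth (kupisch As) i \<and>
          (g + 1) div 2 \<le> subtree_depth (kupisch As) j)"
proof -
  define K where "K = kupisch As"
  have G: "GK K" unfolding K_def kupisch_def using GK_concat[OF assms] .
  interpret mp "nP K" "length K" using GK_mp[OF G] .
  have L: "gldim As \<le> g \<longleftrightarrow> (\<forall>i<length K. pdim K i 1 \<le> g)"
    using gldim_concat[OF assms] unfolding K_def kupisch_def by simp
  have pd: "pdim K i 1 \<le> g \<longleftrightarrow>
      \<not> (\<forall>k\<le>g. sq (nP K) i (Suc i) (Suc k) < sq (nP K) i (Suc i) (Suc (Suc k)))"
    if i: "i < length K" for i
  proof -
    have "Suc i \<le> nP K i" using gt[OF i] by simp
    then have "(Suc g \<le> pdim K i (Suc i - i)) =
      (\<forall>k<Suc g. sq (nP K) i (Suc i) (Suc k) < sq (nP K) i (Suc i) (Suc (Suc k)))"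
      using pdim_sq[OF G, of i "Suc i" "Suc g"] by simp
    then show ?thesis by (auto simp: less_Suc_eq_le simp del: sq.simps)
  qed
  have sib: "siblings K i j \<longleftrightarrow> i < length K \<and> j < length K \<and> i \<noteq> j \<and> nP K i = nP K j" for i j
    unfolding siblings_def tau_parent_def nP_def by auto
  have R: "(\<exists>i j. i < j \<and> siblings K i j \<and> g div 2 \<le> subtree_depth K i \<and>
          (g + 1) div 2 \<le> subtree_depth K j) \<longleftrightarrow>
     (\<exists>u v. u < v \<and> v < length K \<and> nP K u = nP K v \<and> (\<exists>d. (nP K ^^ (g div 2)) d = u) \<and>
       (\<exists>e. (nP K ^^ ((g+1) div 2)) e = v))"
  proof
    assume "\<exists>i j. i < j \<and> siblings K i j \<and> g div 2 \<le> subtree_depth K i \<and>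
          (g + 1) div 2 \<le> subtree_depth K j"
    then obtain i j where h: "i < j" "siblings K i j" "g div 2 \<le> subtree_depth K i"
          "(g + 1) div 2 \<le> subtree_depth K j" by blast
    then have s: "i < length K" "j < length K" "nP K i = nP K j" using sib by auto
    have d1: "\<exists>d. (nP K ^^ (g div 2)) d = i" using h(3) depth_iff[OF G s(1)] by simp
    have d2: "\<exists>e. (nP K ^^ ((g+1) div 2)) e = j" using h(4) depth_iff[OF G s(2)] by simp
    show "\<exists>u v. u < v \<and> v < length K \<and> nP K u = nP K v \<and> (\<exists>d. (nP K ^^ (g div 2)) d = u) \<and>
       (\<exists>e. (nP K ^^ ((g+1) div 2)) e = v)"
      using h(1) s d1 d2 by blast
  next
    assume "\<exists>u v. u < v \<and> v < length K \<and> nP K u = nP K v \<and> (\<exists>d. (nP K ^^ (g div 2)) d = u) \<and>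
       (\<exists>e. (nP K ^^ ((g+1) div 2)) e = v)"
    then obtain u v where h: "u < v" "v < length K" "nP K u = nP K v" "\<exists>d. (nP K ^^ (g div 2)) d = u"
       "\<exists>e. (nP K ^^ ((g+1) div 2)) e = v" by blast
    have ul: "u < length K" using h by simp
    show "\<exists>i j. i < j \<and> siblings K i j \<and> g div 2 \<le> subtree_depth K i \<and>
          (g + 1) div 2 \<le> subtree_depth K j"
    proof (intro exI conjI)
      show "u < v" by (rule h(1))
      show "siblings K u v" unfolding sib using h ul by simp
      show "g div 2 \<le> subtree_depth K u" using h(4) depth_iff[OF G ul] by simp
      show "(g + 1) div 2 \<le> subtree_depth K v" using h(5) depth_iff[OF G h(2)] by simp
    qed
  qed
  have C: "(\<exists>i<length K. \<forall>k\<le>g. sq (nP K) i (Suc i) (Suc k) < sq (nP K) i (Suc i) (Suc (Suc k))) \<longleftrightarrow>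
     (\<exists>u v. u < v \<and> v < length K \<and> nP K u = nP K v \<and> (\<exists>d. (nP K ^^ (g div 2)) d = u) \<and>
       (\<exists>e. (nP K ^^ ((g+1) div 2)) e = v))"
  proof
    assume "\<exists>i<length K. \<forall>k\<le>g. sq (nP K) i (Suc i) (Suc k) < sq (nP K) i (Suc i) (Suc (Suc k))"
    then obtain i where "i < length K" "\<forall>k\<le>g. sq (nP K) i (Suc i) (Suc k) < sq (nP K) i (Suc i) (Suc (Suc k))"
      by blast
    then show "\<exists>u v. u < v \<and> v < length K \<and> nP K u = nP K v \<and> (\<exists>d. (nP K ^^ (g div 2)) d = u) \<and>
       (\<exists>e. (nP K ^^ ((g+1) div 2)) e = v)" by (rule core_fwd)
  next
    assume "\<exists>u v. u < v \<and> v < length K \<and> nP K u = nP K v \<and> (\<exists>d. (nP K ^^ (g div 2)) d = u) \<and>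
       (\<exists>e. (nP K ^^ ((g+1) div 2)) e = v)"
    then obtain u v d e where "u < v" "v < length K" "nP K u = nP K v" "(nP K ^^ (g div 2)) d = u"
       "(nP K ^^ ((g+1) div 2)) e = v" by blast
    then show "\<exists>i<length K. \<forall>k\<le>g. sq (nP K) i (Suc i) (Suc k) < sq (nP K) i (Suc i) (Suc (Suc k))"
      by (rule core_bwd)
  qed
  have "(\<forall>i<length K. pdim K i 1 \<le> g) \<longleftrightarrow>
     \<not> (\<exists>i<length K. \<forall>k\<le>g. sq (nP K) i (Suc i) (Suc k) < sq (nP K) i (Suc i) (Suc (Suc k)))"
    using pd by blast
  then show ?thesis unfolding K_def[symmetric] L R C[symmetric] .
qed

end
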